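(* Let $U$ be a subgroup of $G^*$ and let $F$ be a $U$-symmetric matching mechanism. Then $F$ admits a refinement $H$ (a matching mechanism with $H(p)\subseteq F(p)$ for all $p\in\mathcal{P}$) that is $U$-symmetric and resolute if and only if $F(p)\cap C^U(p)\neq\varnothing$ for every $p\in\mathcal{P}$.
   Context: Fix $n\ge 2$, $W=\{1,\dots,n\}$, $M=\{n+1,\dots,2n\}$, $I=W\cup M$. Permutations compose right-to-left. A preference profile is a function $p$ on $I$ assigning to each $x\in W$ a linear order $p(x)$ on $M$ and to each $y\in M$ a linear order $p(y)$ on $W$; $\mathcal{P}$ is the set of preference profiles. A matching is a permutation $\mu$ of $I$ with $\mu(W)=M$, $\mu(M)=W$ and $\mu(\mu(z))=z$ for all $z$; $\mathcal{M}$ is the set of matchings. $G^*=\{\varphi\in\mathrm{Sym}(I):\{\varphi(W),\varphi(M)\}=\{W,M\}\}$. For a linear order $R$ on $X\subseteq I$ and $\varphi\in\mathrm{Sym}(I)$, $\varphi R$ is the relation on $\varphi(X)$ with $(a,b)\in\varphi R$ iff $(\varphi^{-1}(a),\varphi^{-1}(b))\in R$. For $p\in\mathcal{P}$, $\varphi\in G^*$, $p^\varphi(z)=\varphi\,p(\varphi^{-1}(z))$. For a permutation $\mu$, $\mu^\varphi=\varphi\mu\varphi^{-1}$; $S^\varphi=\{\mu^\varphi:\mu\in S\}$. A matching mechanism is a correspondence $F$ from $\mathcal{P}$ to $\mathcal{M}$; resolute if $|F(p)|=1$ for all $p$; $U$-symmetric if $F(p^\varphi)=F(p)^\varphi$ for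 all $p$ and $\varphi\in U$. For $U\le G^*$ and $p\in\mathcal{P}$, $\mathrm{Stab}_U(p)=\{\varphi\in U:p^\varphi=p\}$ and $C^U(p)=\{\mu\in\mathcal{M}:\mu^\varphi=\mu \text{ for all }\varphi\in\mathrm{Stab}_U(p)\}$. *)

theory Defs
  imports "HOL-Combinatorics.Permutations"
begin

text \<open>Agents: women W = {1..n}, men M = {n+1..2n}, I = W \<union> M.
  Permutations of I are functions nat \<Rightarrow> nat that permute I (identity outside I).\<close>

definition Wset :: "nat \<Rightarrow> nat set" where "Wset n = {1..n}"
definition Mset :: "nat \<Rightarrow> nat set" where "Mset n = {n+1..2*n}"
definition Iset :: "nat \<Rightarrow> nat set" where "Iset n = Wset n \<union> Mset n"

definition rel_act :: "(nat \<Rightarrow> nat) \<Rightarrow> (nat \<times> nat) set \<Rightarrow> (nat \<times> nat) set" where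
  "rel_act \<phi> R = {(a, b). (inv \<phi> a, inv \<phi> b) \<in> R}"

text \<open>Preference profiles; the value outside I is fixed to be empty so that
  profiles are determined by their values on I.\<close>
definition profiles :: "nat \<Rightarrow> (nat \<Rightarrow> (nat \<times> nat) set) set" where
  "profiles n = {p. (\<forall>x\<in>Wset n. linear_order_on (Mset n) (p x))
                  \<and> (\<forall>y\<in>Mset n. linear_order_on (Wset n) (p y))
                  \<and> (\<forall>z. z \<notin> Iset n \<longrightarrow> p z = {})}"

definition matchings :: "nat \<Rightarrow> (nat \<Rightarrow> nat) set" where
  "matchings n = {\<mu>. \<mu> permutes Iset n \<and> \<mu> ` Wset n = Mset n \<and> \<mu> ` Mset n = Wset n
                    \<and> (\<forall>z\<in>Iset n. \<mu> (\<mu> z) = z)}"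

definition Gstar :: "nat \<Rightarrow> (nat \<Rightarrow> nat) set" where
  "Gstar n = {\<phi>. \<phi> permutes Iset n \<and> {\<phi> ` Wset n, \<phi> ` Mset n} = {Wset n, Mset n}}"

definition is_subgroup :: "(nat \<Rightarrow> nat) set \<Rightarrow> (nat \<Rightarrow> nat) set \<Rightarrow> bool" where
  "is_subgroup U G \<longleftrightarrow> U \<subseteq> G \<and> id \<in> U \<and> (\<forall>a\<in>U. \<forall>b\<in>U. a \<circ> b \<in> U) \<and> (\<forall>a\<in>U. inv a \<in> U)"

definition prof_act :: "(nat \<Rightarrow> nat) \<Rightarrow> (nat \<Rightarrow> (nat \<times> nat) set) \<Rightarrow> (nat \<Rightarrow> (nat \<times> nat) set)" where
  "prof_act \<phi> p = (\<lambda>z. rel_act \<phi> (p (inv \<phi> z)))"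

definition perm_conj :: "(nat \<Rightarrow> nat) \<Rightarrow> (nat \<Rightarrow> nat) \<Rightarrow> (nat \<Rightarrow> nat)" where
  "perm_conj \<phi> \<mu> = \<phi> \<circ> \<mu> \<circ> inv \<phi>"

definition mechanism :: "nat \<Rightarrow> ((nat \<Rightarrow> (nat \<times> nat) set) \<Rightarrow> (nat \<Rightarrow> nat) set) \<Rightarrow> bool" where
  "mechanism n F \<longleftrightarrow> (\<forall>p\<in>profiles n. F p \<subseteq> matchings n)"

definition resolute :: "nat \<Rightarrow> ((nat \<Rightarrow> (nat \<times> nat) set) \<Rightarrow> (nat \<Rightarrow> nat) set) \<Rightarrow> bool" where
  "resolute n F \<longleftrightarrow> (\<forall>p\<in>profiles n. card (F p) = 1)"

definition symmetric :: "nat \<Rightarrow> (nat \<Rightarrow> nat) set \<Rightarrow> ((nat \<Rightarrow> (nat \<times> nat) set) \<Rightarrow> (nat \<Rightarrow> nat) set) \<Rightarrow> bool" where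
  "symmetric n U F \<longleftrightarrow> (\<forall>p\<in>profiles n. \<forall>\<phi>\<in>U. F (prof_act \<phi> p) = perm_conj \<phi> ` F p)"

definition Stab :: "(nat \<Rightarrow> nat) set \<Rightarrow> (nat \<Rightarrow> (nat \<times> nat) set) \<Rightarrow> (nat \<Rightarrow> nat) set" where
  "Stab U p = {\<phi>\<in>U. prof_act \<phi> p = p}"

definition CU :: "nat \<Rightarrow> (nat \<Rightarrow> nat) set \<Rightarrow> (nat \<Rightarrow> (nat \<times> nat) set) \<Rightarrow> (nat \<Rightarrow> nat) set" where
  "CU n U p = {\<mu>\<in>matchings n. \<forall>\<phi>\<in>Stab U p. perm_conj \<phi> \<mu> = \<mu>}"

end

theory Submission
  imports Defs
begin

lemma bij_of_sub:
  assumes "is_subgroup U (Gstar n)" "\<phi> \<in> U" shows "bij \<phi>"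
  using assms unfolding is_subgroup_def Gstar_def by (auto simp: permutes_bij)

lemma rel_act_id: "rel_act id R = R"
  by (simp add: rel_act_def)

lemma rel_act_comp: "bij a \<Longrightarrow> bij b \<Longrightarrow> rel_act (a \<circ> b) R = rel_act a (rel_act b R)"
  by (simp add: rel_act_def o_inv_distrib bij_is_inj bij_is_surj)

lemma prof_act_id: "prof_act id p = p"
  by (simp add: prof_act_def rel_act_id)

lemma prof_act_comp: "bij a \<Longrightarrow> bij b \<Longrightarrow> prof_act (a \<circ> b) p = prof_act a (prof_act b p)"
  by (simp add: prof_act_def rel_act_comp o_inv_distrib)

lemma perm_conj_id: "perm_conj id m = m"
  by (simp add: perm_conj_def)

lemma perm_conj_comp: "bij a \<Longrightarrow> bij b \<Longrightarrow> perm_conj (a \<circ> b) m = perm_conj a (perm_conj b m)"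
  by (simp add: perm_conj_def o_inv_distrib o_assoc)

theorem theorem1:
  fixes n :: nat and U :: "(nat \<Rightarrow> nat) set"
    and F :: "(nat \<Rightarrow> (nat \<times> nat) set) \<Rightarrow> (nat \<Rightarrow> nat) set"
  assumes "n \<ge> 2"
    and "is_subgroup U (Gstar n)"
    and "mechanism n F"
    and "symmetric n U F"
  shows "(\<exists>H. mechanism n H \<and> (\<forall>p\<in>profiles n. H p \<subseteq> F p) \<and> symmetric n U H \<and> resolute n H)
         \<longleftrightarrow> (\<forall>p\<in>profiles n. F p \<inter> CU n U p \<noteq> {})"
proof
  assume "\<exists>H. mechanism n H \<and> (\<forall>p\<in>profiles n. H p \<subseteq> F p) \<and> symmetric n U H \<and> resolute n H"
  then obtain H where mH: "mechanism n H" and sub: "\<forall>p\<in>profiles n. H p \<subseteq> F p"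
    and sH: "symmetric n U H" and rH: "resolute n H" by blast
  show "\<forall>p\<in>profiles n. F p \<inter> CU n U p \<noteq> {}"
  proof
    fix p assume p: "p \<in> profiles n"
    then obtain m where Hm: "H p = {m}" using rH unfolding resolute_def by (meson card_1_singletonE)
    have "m \<in> matchings n" using mH p Hm unfolding mechanism_def by auto
    moreover have "\<forall>\<phi>\<in>Stab U p. perm_conj \<phi> m = m"
    proof
      fix \<phi> assume "\<phi> \<in> Stab U p"
      then have "\<phi> \<in> U" "prof_act \<phi> p = p" by (auto simp: Stab_def)
      then have "H p = perm_conj \<phi> ` H p" using sH p unfolding symmetric_def by metis
      then show "perm_conj \<phi> m = m" using Hm by auto
    qed
    ultimately have "m \<in> CU n U p" by (simp add: CU_def)
    moreover have "m \<in> F p" using sub p Hm by auto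
    ultimately show "F p \<inter> CU n U p \<noteq> {}" by auto
  qed
next
  assume ne: "\<forall>p\<in>profiles n. F p \<inter> CU n U p \<noteq> {}"
  have bijU: "\<And>\<phi>. \<phi> \<in> U \<Longrightarrow> bij \<phi>" using bij_of_sub[OF assms(2)] by blast
  have invU: "\<And>\<phi>. \<phi> \<in> U \<Longrightarrow> inv \<phi> \<in> U" and compU: "\<And>a b. a \<in> U \<Longrightarrow> b \<in> U \<Longrightarrow> a \<circ> b \<in> U"
    and idU: "id \<in> U"
    using assms(2) unfolding is_subgroup_def by auto
  have invl: "\<And>\<phi>. \<phi> \<in> U \<Longrightarrow> inv \<phi> \<circ> \<phi> = id"
    using bijU by (simp add: bij_is_inj)
  have invr: "\<And>\<phi>. \<phi> \<in> U \<Longrightarrow> \<phi> \<circ> inv \<phi> = id"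
    using bijU by (meson bij_is_surj surj_iff)
  have PA: "\<And>a b p. a \<in> U \<Longrightarrow> b \<in> U \<Longrightarrow> prof_act (a \<circ> b) p = prof_act a (prof_act b p)"
    using prof_act_comp bijU by blast
  have PC: "\<And>a b m. a \<in> U \<Longrightarrow> b \<in> U \<Longrightarrow> perm_conj (a \<circ> b) m = perm_conj a (perm_conj b m)"
    using perm_conj_comp bijU by blast
  define cls where "cls q = {r. \<exists>\<phi>\<in>U. r = prof_act \<phi> q}" for q
  define rep where "rep q = (SOME r. r \<in> cls q \<inter> profiles n)" for q
  define mu where "mu r = (SOME m. m \<in> F r \<inter> CU n U r)" for r
  define H where "H q = {perm_conj \<psi> (mu (rep q)) | \<psi>. \<psi> \<in> U \<and> q = prof_act \<psi> (rep q)}" for q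
  have bk: "q = prof_act (inv \<phi>) r" if "\<phi> \<in> U" "r = prof_act \<phi> q" for \<phi> q r
    using that prof_act_comp[OF bijU[OF invU[OF that(1)]] bijU[OF that(1)], of q] invl prof_act_id
    by simp
  have cls_eq: "cls q = cls r" if "\<phi> \<in> U" "q = prof_act \<phi> r" for \<phi> q r
  proof
    show "cls q \<subseteq> cls r"
      unfolding cls_def using that compU PA by (auto, metis)
    have "r = prof_act (inv \<phi>) q" using bk that by blast
    then show "cls r \<subseteq> cls q"
      unfolding cls_def using that compU invU PA by (auto, metis)
  qed
  have rep: "rep p \<in> profiles n \<and> (\<exists>\<psi>\<in>U. p = prof_act \<psi> (rep p))" if p: "p \<in> profiles n" for p
  proof -
    have "p \<in> cls p \<inter> profiles n" using p idU prof_act_id[of p, symmetric] unfolding cls_def by blast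
    then have "rep p \<in> cls p \<inter> profiles n" unfolding rep_def by (rule someI[of "\<lambda>r. r \<in> cls p \<inter> profiles n"])
    then obtain \<phi> where "\<phi> \<in> U" "rep p = prof_act \<phi> p" "rep p \<in> profiles n" unfolding cls_def by auto
    then show ?thesis using bk invU by blast
  qed
  have mu: "mu r \<in> F r \<inter> CU n U r" if "r \<in> profiles n" for r
  proof -
    have "\<exists>m. m \<in> F r \<inter> CU n U r" using ne that by blast
    then show ?thesis unfolding mu_def by (rule someI_ex)
  qed
  have Hsing: "H p = {perm_conj \<psi> (mu (rep p))}" if p: "p \<in> profiles n" "\<psi> \<in> U" "p = prof_act \<psi> (rep p)" for p \<psi>
  proof -
    have "perm_conj \<psi>' (mu (rep p)) = perm_conj \<psi> (mu (rep p))"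
      if "\<psi>' \<in> U" "p = prof_act \<psi>' (rep p)" for \<psi>'
    proof -
      let ?s = "inv \<psi> \<circ> \<psi>'"
      have sU: "?s \<in> U" using compU[OF invU[OF p(2)] that(1)] .
      have "prof_act ?s (rep p) = prof_act (inv \<psi>) p"
        using PA[OF invU[OF p(2)] that(1)] that(2)[symmetric] by simp
      also have "\<dots> = rep p" using bk[OF p(2) p(3)] by simp
      finally have "?s \<in> Stab U (rep p)" using sU by (simp add: Stab_def)
      then have fx: "perm_conj ?s (mu (rep p)) = mu (rep p)"
        using mu[of "rep p"] conjunct1[OF rep[OF p(1)]] by (auto simp: CU_def)
      have "perm_conj \<psi>' (mu (rep p)) = perm_conj (\<psi> \<circ> ?s) (mu (rep p))"
        using invr[OF p(2)] by (simp add: o_assoc)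
      also have "\<dots> = perm_conj \<psi> (mu (rep p))"
        using PC[OF p(2) sU] fx by simp
      finally show ?thesis .
    qed
    then have K: "\<forall>\<psi>'\<in>{\<psi>'\<in>U. p = prof_act \<psi>' (rep p)}. perm_conj \<psi>' (mu (rep p)) = perm_conj \<psi> (mu (rep p))"
      by blast
    have A: "H p = (\<lambda>\<psi>'. perm_conj \<psi>' (mu (rep p))) ` {\<psi>'\<in>U. p = prof_act \<psi>' (rep p)}"
      unfolding H_def by blast
    have B: "\<psi> \<in> {\<psi>'\<in>U. p = prof_act \<psi>' (rep p)}"
      by (intro CollectI conjI p(2) p(3))
    show ?thesis unfolding A using K B by blast
  qed
  have HF: "H p \<subseteq> F p" if p: "p \<in> profiles n" for p
  proof -
    obtain \<psi> where ps: "\<psi> \<in> U" "p = prof_act \<psi> (rep p)" using rep p by blast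
    have "F (prof_act \<psi> (rep p)) = perm_conj \<psi> ` F (rep p)"
      using assms(4) rep[OF p] ps(1) unfolding symmetric_def by blast
    then have "F p = perm_conj \<psi> ` F (rep p)" by (simp only: ps(2)[symmetric])
    then show ?thesis using Hsing[OF p ps] mu[of "rep p"] conjunct1[OF rep[OF p]] by auto
  qed
  have "mechanism n H" using HF assms(3) unfolding mechanism_def by blast
  moreover have "resolute n H" unfolding resolute_def
  proof
    fix p assume p: "p \<in> profiles n"
    obtain \<psi> where ps: "\<psi> \<in> U" "p = prof_act \<psi> (rep p)" using rep p by blast
    show "card (H p) = 1" using Hsing[OF p ps] by simp
  qed
  moreover have "symmetric n U H" unfolding symmetric_def
  proof (intro ballI)
    fix p \<phi> assume p: "p \<in> profiles n" and ph: "\<phi> \<in> U"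
    obtain \<psi> where ps: "\<psi> \<in> U" "p = prof_act \<psi> (rep p)" using rep p by blast
    let ?q = "prof_act \<phi> p"
    have "cls ?q = cls p" using cls_eq ph by blast
    then have rq: "rep ?q = rep p" unfolding rep_def by simp
    have q1: "?q = prof_act (\<phi> \<circ> \<psi>) (rep ?q)" using rq ps(2)[symmetric] PA[OF ph ps(1)] by simp
    have c: "\<phi> \<circ> \<psi> \<in> U" using compU ph ps by blast
    have "H ?q = {perm_conj (\<phi> \<circ> \<psi>) (mu (rep ?q))}"
    proof -
      have "H ?q = {perm_conj \<psi>' (mu (rep ?q)) | \<psi>'. \<psi>' \<in> U \<and> ?q = prof_act \<psi>' (rep ?q)}"
        by (simp add: H_def)
      also have "\<dots> = {perm_conj \<psi>' (mu (rep p)) | \<psi>'. \<psi>' \<in> U \<and> p = prof_act (inv \<phi> \<circ> \<psi>') (rep p)}"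
      proof -
        have "?q = prof_act \<psi>' (rep p) \<longleftrightarrow> p = prof_act (inv \<phi> \<circ> \<psi>') (rep p)" if "\<psi>' \<in> U" for \<psi>'
        proof
          assume b: "?q = prof_act \<psi>' (rep p)"
          show "p = prof_act (inv \<phi> \<circ> \<psi>') (rep p)"
            by (simp only: PA[OF invU[OF ph] that]) (rule bk[OF ph b[symmetric]])
        next
          assume a: "p = prof_act (inv \<phi> \<circ> \<psi>') (rep p)"
          have "?q = prof_act (\<phi> \<circ> (inv \<phi> \<circ> \<psi>')) (rep p)"
            by (simp only: PA[OF ph compU[OF invU[OF ph] that]]) (rule arg_cong[OF a])
          then show "?q = prof_act \<psi>' (rep p)" using invr[OF ph] by (simp add: o_assoc)
        qed
        then show ?thesis using rq by auto
      qed
      also have "\<dots> = {perm_conj (\<phi> \<circ> \<psi>) (mu (rep p))}"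
      proof -
        have "perm_conj \<psi>' (mu (rep p)) = perm_conj (\<phi> \<circ> \<psi>) (mu (rep p))"
          if "\<psi>' \<in> U" "p = prof_act (inv \<phi> \<circ> \<psi>') (rep p)" for \<psi>'
        proof -
          have "inv \<phi> \<circ> \<psi>' \<in> U" using that ph compU invU by blast
          then have "H p = {perm_conj (inv \<phi> \<circ> \<psi>') (mu (rep p))}" using Hsing p that by blast
          moreover have "H p = {perm_conj \<psi> (mu (rep p))}" using Hsing p ps by blast
          ultimately have e: "perm_conj (inv \<phi> \<circ> \<psi>') (mu (rep p)) = perm_conj \<psi> (mu (rep p))" by simp
          have "perm_conj \<psi>' (mu (rep p)) = perm_conj (\<phi> \<circ> (inv \<phi> \<circ> \<psi>')) (mu (rep p))"
            using invr[OF ph] by (simp add: o_assoc)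
          also have "\<dots> = perm_conj \<phi> (perm_conj (inv \<phi> \<circ> \<psi>') (mu (rep p)))"
            using PC[OF ph \<open>inv \<phi> \<circ> \<psi>' \<in> U\<close>] by simp
          also have "\<dots> = perm_conj (\<phi> \<circ> \<psi>) (mu (rep p))"
            using e PC[OF ph ps(1)] by simp
          finally show ?thesis .
        qed
        moreover have "p = prof_act (inv \<phi> \<circ> (\<phi> \<circ> \<psi>)) (rep p)"
        proof -
          have "inv \<phi> \<circ> (\<phi> \<circ> \<psi>) = \<psi>" using invl[OF ph] by (simp add: o_assoc)
          then show ?thesis by (simp only: ps(2)[symmetric])
        qed
        ultimately show ?thesis using c by blast
      qed
      finally show ?thesis using rq by simp
    qed
    also have "\<dots> = perm_conj \<phi> ` H p"
      using Hsing[OF p ps] PC[OF ph ps(1)] rq by simp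
    finally show "H ?q = perm_conj \<phi> ` H p" .
  qed
  ultimately show "\<exists>H. mechanism n H \<and> (\<forall>p\<in>profiles n. H p \<subseteq> F p) \<and> symmetric n U H \<and> resolute n H"
    using HF by blast
qed

end
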